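(* Assume $\omega_\ell>0$, $\sum_\ell\omega_\ell=1$ and $\|\omega\|_\infty\sum_\ell\omega_\ell d_\ell\le c_0\sum_\ell\omega_\ell^2d_\ell$ for a constant $c_0>0$. Fix any $\alpha>0$ and $r\ge1$. Then there is a constant $C=C(c_0)$ such that with probability at least $1-n^{-r}$ the following holds: for every $m\in[n]$ with $m\le\alpha n$ and every $I,J\subseteq[n]$ with $|I|=|J|=m$, letting $I'\subseteq I$ be the set of $i\in I$ with $\sum_{j\in J}\bar A_{ij}\le\alpha\sum_\ell\omega_\ell d_\ell$, $$\|(\bar A-\mathbb E\bar A)_{I'\times J}\|_{\infty\to2}\le C\sqrt{\alpha\Big(\sum_\ell\omega_\ell^2d_\ell\Big)\,m\,r\log\Big(\frac{en}{m}\Big)}.$$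
   Context: Here $A^{(1)},\dots,A^{(L)}$ are random $n\times n$ matrices whose entries $A^{(\ell)}_{ij}\sim\mathrm{Bern}(p^{(\ell)}_{ij})$, $i,j\in[n]$, $\ell\in[L]$, are all mutually independent (no symmetry imposed). $\bar A=\sum_\ell\omega_\ell A^{(\ell)}$, $d_\ell=\max_{i,j}np^{(\ell)}_{ij}$. For a matrix $B$ and index sets $I',J$, $B_{I'\times J}$ is the submatrix with rows in $I'$ and columns in $J$; $\|B\|_{\infty\to2}=\sup_{\|x\|_\infty\le1}\|Bx\|_2$. *)

theory Defs
  imports "HOL-Probability.Probability"
begin

text \<open>Layers l < L, vertices i, j < n. A sample is a function
  A :: nat \<times> nat \<times> nat \<Rightarrow> bool with A (l,i,j) = (A^{(l)}_{ij} = 1).\<close>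

definition bern_model :: "nat \<Rightarrow> nat \<Rightarrow> (nat \<Rightarrow> nat \<Rightarrow> nat \<Rightarrow> real)
    \<Rightarrow> (nat \<times> nat \<times> nat \<Rightarrow> bool) pmf" where
  "bern_model L n p = Pi_pmf ({..<L} \<times> {..<n} \<times> {..<n}) False
      (\<lambda>(l, i, j). bernoulli_pmf (p l i j))"

definition dmax :: "nat \<Rightarrow> (nat \<Rightarrow> nat \<Rightarrow> nat \<Rightarrow> real) \<Rightarrow> nat \<Rightarrow> real" where
  "dmax n p l = Max {real n * p l i j | i j. i < n \<and> j < n}"

definition Abar :: "nat \<Rightarrow> (nat \<Rightarrow> real) \<Rightarrow> (nat \<times> nat \<times> nat \<Rightarrow> bool) \<Rightarrow> nat \<Rightarrow> nat \<Rightarrow> real" where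
  "Abar L \<omega> A i j = (\<Sum>l<L. \<omega> l * (if A (l, i, j) then 1 else 0))"

definition EAbar :: "nat \<Rightarrow> (nat \<Rightarrow> real) \<Rightarrow> (nat \<Rightarrow> nat \<Rightarrow> nat \<Rightarrow> real) \<Rightarrow> nat \<Rightarrow> nat \<Rightarrow> real" where
  "EAbar L \<omega> p i j = (\<Sum>l<L. \<omega> l * p l i j)"

definition norm_inf2 :: "(nat \<Rightarrow> nat \<Rightarrow> real) \<Rightarrow> nat set \<Rightarrow> nat set \<Rightarrow> real" where
  "norm_inf2 B I J = Sup {sqrt (\<Sum>i\<in>I. (\<Sum>j\<in>J. B i j * x j)\<^sup>2) | x. \<forall>j\<in>J. \<bar>x j\<bar> \<le> 1}"

end

theory Submission
  imports Defs
begin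


lemma quad_conv:
  fixes c b t :: real
  assumes "\<bar>t\<bar> \<le> 1"
  shows "(c + b*t)^2 \<le> ((1+t)/2)*(c+b)^2 + ((1-t)/2)*(c-b)^2"
proof -
  have "((1+t)/2)*(c+b)^2 + ((1-t)/2)*(c-b)^2 - (c + b*t)^2 = b^2*(1-t^2)"
    by (simp add: power2_eq_square field_simps)
  moreover have "t^2 \<le> 1" using assms by (simp add: abs_square_le_1)
  ultimately show ?thesis by (smt (verit) mult_nonneg_nonneg zero_le_power2)
qed

definition Qf :: "(nat \<Rightarrow> nat \<Rightarrow> real) \<Rightarrow> nat set \<Rightarrow> nat set \<Rightarrow> (nat \<Rightarrow> real) \<Rightarrow> real" where
  "Qf M I J x = (\<Sum>i\<in>I. (\<Sum>j\<in>J. M i j * x j)^2)"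

lemma Qf_cong: "(\<And>j. j \<in> J \<Longrightarrow> x j = y j) \<Longrightarrow> Qf M I J x = Qf M I J y"
  unfolding Qf_def by (intro sum.cong refl arg_cong[where f="\<lambda>u. u^2"]) auto

lemma Qf_split:
  assumes "finite J" "k \<in> J"
  shows "Qf M I J x = (\<Sum>i\<in>I. ((\<Sum>j\<in>J-{k}. M i j * x j) + M i k * x k)^2)"
  unfolding Qf_def using assms by (simp add: sum.remove add.commute)

lemma cube_vertex_aux:
  assumes "finite J" "finite K"
  shows "\<forall>x. (\<forall>j\<in>J. \<bar>x j\<bar> \<le> 1) \<longrightarrow> (\<forall>j\<in>J-K. x j \<in> {-1,1}) \<longrightarrow>
     (\<exists>v\<in>PiE J (\<lambda>_. {-1,1::real}). Qf M I J x \<le> Qf M I J v)"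
  using assms(2)
proof (induction K rule: finite_induct)
  case empty
  show ?case
  proof (intro allI impI)
    fix x :: "nat \<Rightarrow> real" assume "\<forall>j\<in>J. \<bar>x j\<bar> \<le> 1" "\<forall>j\<in>J-{}. x j \<in> {-1,1}"
    then have "restrict x J \<in> PiE J (\<lambda>_. {-1,1::real})" by auto
    moreover have "Qf M I J x = Qf M I J (restrict x J)" by (rule Qf_cong) auto
    ultimately show "\<exists>v\<in>PiE J (\<lambda>_. {-1,1::real}). Qf M I J x \<le> Qf M I J v" by force
  qed
next
  case (insert k K)
  show ?case
  proof (intro allI impI)
    fix x :: "nat \<Rightarrow> real" assume xb: "\<forall>j\<in>J. \<bar>x j\<bar> \<le> 1" and xv: "\<forall>j\<in>J-insert k K. x j \<in> {-1,1}"
    show "\<exists>v\<in>PiE J (\<lambda>_. {-1,1::real}). Qf M I J x \<le> Qf M I J v"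
    proof (cases "k \<in> J")
      case False
      then have "\<forall>j\<in>J-K. x j \<in> {-1,1}" using xv by auto
      then show ?thesis using insert.IH xb by blast
    next
      case True
      define x1 where "x1 = x(k := 1)"
      define x2 where "x2 = x(k := -1)"
      have h1: "\<exists>v\<in>PiE J (\<lambda>_. {-1,1::real}). Qf M I J x1 \<le> Qf M I J v"
        using insert.IH xb xv unfolding x1_def by auto
      have h2: "\<exists>v\<in>PiE J (\<lambda>_. {-1,1::real}). Qf M I J x2 \<le> Qf M I J v"
        using insert.IH xb xv unfolding x2_def by auto
      define t where "t = x k"
      have tb: "\<bar>t\<bar> \<le> 1" using xb True t_def by auto
      define cc where "cc i = (\<Sum>j\<in>J-{k}. M i j * x j)" for i
      have e0: "Qf M I J x = (\<Sum>i\<in>I. (cc i + M i k * t)^2)"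
        using Qf_split[OF assms(1) True] cc_def t_def by simp
      have e1: "Qf M I J x1 = (\<Sum>i\<in>I. (cc i + M i k)^2)"
      proof -
        have "Qf M I J x1 = (\<Sum>i\<in>I. ((\<Sum>j\<in>J-{k}. M i j * x1 j) + M i k * x1 k)^2)"
          using Qf_split[OF assms(1) True] by simp
        also have "\<dots> = (\<Sum>i\<in>I. (cc i + M i k)^2)"
          unfolding cc_def x1_def by (intro sum.cong refl arg_cong[where f="\<lambda>u. u^2"]) auto
        finally show ?thesis .
      qed
      have e2: "Qf M I J x2 = (\<Sum>i\<in>I. (cc i - M i k)^2)"
      proof -
        have "Qf M I J x2 = (\<Sum>i\<in>I. ((\<Sum>j\<in>J-{k}. M i j * x2 j) + M i k * x2 k)^2)"
          using Qf_split[OF assms(1) True] by simp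
        also have "\<dots> = (\<Sum>i\<in>I. (cc i - M i k)^2)"
          unfolding cc_def x2_def by (intro sum.cong refl arg_cong[where f="\<lambda>u. u^2"]) auto
        finally show ?thesis .
      qed
      have "Qf M I J x \<le> ((1+t)/2) * Qf M I J x1 + ((1-t)/2) * Qf M I J x2"
        unfolding e0 e1 e2 sum_distrib_left sum.distrib[symmetric]
        by (intro sum_mono quad_conv tb)
      also have "\<dots> \<le> max (Qf M I J x1) (Qf M I J x2)"
      proof -
        have "0 \<le> (1+t)/2" "0 \<le> (1-t)/2" using tb by auto
        then have "((1+t)/2) * Qf M I J x1 \<le> ((1+t)/2) * max (Qf M I J x1) (Qf M I J x2)"
             "((1-t)/2) * Qf M I J x2 \<le> ((1-t)/2) * max (Qf M I J x1) (Qf M I J x2)"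
          by (auto intro: mult_left_mono)
        then show ?thesis by (simp add: field_simps) 
      qed
      finally show ?thesis using h1 h2 by (smt (verit))
    qed
  qed
qed

lemma cube_vertex:
  assumes "finite J" "\<forall>j\<in>J. \<bar>x j\<bar> \<le> 1"
  shows "\<exists>v\<in>PiE J (\<lambda>_. {-1,1::real}). Qf M I J x \<le> Qf M I J v"
  using cube_vertex_aux[OF assms(1) assms(1), of M I] assms(2) by auto





lemma exp_le_quad:
  fixes u :: real assumes "\<bar>u\<bar> \<le> 1" shows "exp u \<le> 1 + u + u^2"
proof (cases "u \<ge> 0")
  case True then show ?thesis using exp_bound[of u] assms by auto
next
  case False
  have "exp (-u) \<ge> 1 - u" using exp_ge_add_one_self[of "-u"] by simp
  then have "exp u \<le> 1/(1-u)" using False by (simp add: exp_minus field_simps)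
  also have "\<dots> \<le> 1 + u + u^2"
  proof -
    have e: "(1-u)*(1+u+u^2) = 1 - u^3" by (simp add: algebra_simps power2_eq_square power3_eq_cube)
    have "u*u \<ge> 0" by simp
    then have "u*u*u \<le> 0" using False by (simp add: mult_nonneg_nonpos)
    then have "u^3 \<le> 0" by (simp add: power3_eq_cube)
    then have "1 \<le> (1-u)*(1+u+u^2)" using e by linarith
    then show ?thesis using False by (simp add: field_simps)
  qed
  finally show ?thesis .
qed
lemma bern_mgf:
  fixes p t :: real
  assumes "0 \<le> p" "p \<le> 1" "\<bar>t\<bar> \<le> 1"
  shows "measure_pmf.expectation (bernoulli_pmf p) (\<lambda>b. exp (t * ((if b then 1 else 0) - p))) \<le> exp (t^2 * p)"
proof -
  have a: "exp (t*(1-p)) \<le> 1 + t*(1-p) + (t*(1-p))^2"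
    by (rule exp_le_quad) (use assms in \<open>auto simp: abs_mult intro!: mult_le_one\<close>)
  have b: "exp (t*(0-p)) \<le> 1 + t*(0-p) + (t*(0-p))^2"
    by (rule exp_le_quad) (use assms in \<open>auto simp: abs_mult intro!: mult_le_one\<close>)
  have "measure_pmf.expectation (bernoulli_pmf p) (\<lambda>b. exp (t * ((if b then 1 else 0) - p)))
      = exp (t*(1-p)) * p + exp (t*(0-p)) * (1-p)" using assms by simp
  also have "\<dots> \<le> (1 + t*(1-p) + (t*(1-p))^2) * p + (1 + t*(0-p) + (t*(0-p))^2) * (1-p)"
    using assms a b by (intro add_mono mult_right_mono) auto
  also have "\<dots> = 1 + t^2 * p * (1-p)" by (simp add: power2_eq_square algebra_simps)
  also have "\<dots> \<le> 1 + t^2 * p" using assms by (simp add: mult_left_mono mult_right_le_one_le)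
  also have "\<dots> \<le> exp (t^2*p)" by (rule exp_ge_add_one_self)
  finally show ?thesis .
qed


lemma pow_fact_le_exp:
  fixes m :: nat
  shows "real m ^ m / fact m \<le> exp (real m)"
proof -
  have s: "(\<lambda>k. real m ^ k /\<^sub>R fact k) sums exp (real m)" by (rule exp_converges)
  have "(\<Sum>k\<in>{m}. real m ^ k /\<^sub>R fact k) \<le> suminf (\<lambda>k. real m ^ k /\<^sub>R fact k)"
    by (rule sum_le_suminf) (use s in \<open>auto simp: sums_iff\<close>)
  then show ?thesis using s by (simp add: sums_iff divide_inverse_commute)
qed

lemma choose_le_exp:
  fixes n m :: nat assumes "1 \<le> m" "m \<le> n"
  shows "real (n choose m) \<le> exp (real m * ln (exp 1 * real n / real m))"
proof -
  have "(n choose m) * fact m \<le> n ^ m" by (rule binomial_fact_pow)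
  then have "real (n choose m) * fact m \<le> real n ^ m"
    by (metis of_nat_fact of_nat_le_iff of_nat_mult of_nat_power)
  then have c: "real (n choose m) \<le> real n ^ m / fact m" by (simp add: field_simps)
  have "real n ^ m / fact m = (real n / real m) ^ m * (real m ^ m / fact m)"
    using assms by (simp add: power_divide)
  also have "\<dots> \<le> (real n / real m) ^ m * exp (real m)"
    by (intro mult_left_mono pow_fact_le_exp) auto
  also have "\<dots> = exp (real m * ln (exp 1 * real n / real m))"
  proof -
    have pos: "real n / real m > 0" using assms by auto
    have "(real n / real m) ^ m = exp (real m * ln (real n / real m))"
      using pos by (simp add: exp_of_nat_mult)
    moreover have "ln (exp 1 * real n / real m) = 1 + ln (real n / real m)"
    proof -
      have "ln (exp 1 * (real n / real m)) = ln (exp 1) + ln (real n / real m)"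
        by (rule ln_mult_pos) (use pos in auto)
      then show ?thesis by simp
    qed
    ultimately show ?thesis by (simp add: exp_add[symmetric] algebra_simps)
  qed
  finally show ?thesis using c by linarith
qed


lemma grid_bound:
  fixes lam T y :: real
  assumes "lam > 0" "\<bar>y\<bar> \<le> T"
  shows "exp (lam * y^2) \<le> (\<Sum>k\<le>nat \<lfloor>sqrt lam * T\<rfloor>. \<Sum>s\<in>{-1,1::real}.
            exp 1 * exp (- ((real k)^2)) * exp (s * (2 * real k * sqrt lam) * y))"
proof -
  define u where "u = sqrt lam * \<bar>y\<bar>"
  have u0: "u \<ge> 0" using assms unfolding u_def by auto
  define k0 where "k0 = nat \<lfloor>u\<rfloor>"
  have k0u: "real k0 \<le> u" "u < real k0 + 1" using u0 unfolding k0_def by linarith+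
  have k0N: "k0 \<le> nat \<lfloor>sqrt lam * T\<rfloor>"
    unfolding k0_def u_def using assms by (intro nat_mono floor_mono mult_left_mono) auto
  have lu: "lam * y^2 = u^2" unfolding u_def using assms by (simp add: power_mult_distrib)
  have "u^2 \<le> 1 - (real k0)^2 + 2 * real k0 * u"
  proof -
    have "(u - real k0)^2 \<le> 1" using k0u by (simp add: abs_square_le_1)
    then show ?thesis by (simp add: power2_eq_square algebra_simps)
  qed
  then have "exp (lam * y^2) \<le> exp 1 * exp (- ((real k0)^2)) * exp (2 * real k0 * u)"
    unfolding lu by (simp add: exp_add[symmetric])
  also have "exp (2 * real k0 * u) \<le> (\<Sum>s\<in>{-1,1::real}. exp (s * (2 * real k0 * sqrt lam) * y))"
  proof (cases "y \<ge> 0")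
    case True then show ?thesis unfolding u_def by (simp add: algebra_simps)
  next
    case False then show ?thesis unfolding u_def by (simp add: algebra_simps)
  qed
  finally have "exp (lam * y^2) \<le> (\<Sum>s\<in>{-1,1::real}. exp 1 * exp (- ((real k0)^2)) * exp (s * (2 * real k0 * sqrt lam) * y))"
    by (simp add: algebra_simps)
  also have "\<dots> \<le> (\<Sum>k\<le>nat \<lfloor>sqrt lam * T\<rfloor>. \<Sum>s\<in>{-1,1::real}.
            exp 1 * exp (- ((real k)^2)) * exp (s * (2 * real k * sqrt lam) * y))"
    by (rule member_le_sum[where f="\<lambda>k. \<Sum>s\<in>{-1,1::real}. exp 1 * exp (- ((real k)^2)) * exp (s * (2 * real k * sqrt lam) * y)"])
       (use k0N in \<open>auto intro: sum_nonneg\<close>)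
  finally show ?thesis .
qed




definition Yr :: "nat \<Rightarrow> (nat \<Rightarrow> real) \<Rightarrow> (nat \<Rightarrow> nat \<Rightarrow> nat \<Rightarrow> real) \<Rightarrow> (nat \<times> nat \<times> nat \<Rightarrow> bool)
   \<Rightarrow> nat set \<Rightarrow> (nat \<Rightarrow> real) \<Rightarrow> nat \<Rightarrow> real" where
  "Yr L \<omega> p A J x i = (\<Sum>j\<in>J. (Abar L \<omega> A i j - EAbar L \<omega> p i j) * x j)"

lemma finite_bern_model: "finite (set_pmf (bern_model L n p))"
proof -
  have "set_pmf (bern_model L n p) = PiE_dflt ({..<L} \<times> {..<n} \<times> {..<n}) False
          (set_pmf \<circ> (\<lambda>(l, i, j). bernoulli_pmf (p l i j)))"
    unfolding bern_model_def by (rule set_Pi_pmf) auto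
  also have "finite \<dots>" by (rule finite_PiE_dflt) auto
  finally show ?thesis .
qed

lemma sum_dom:
  fixes g :: "nat \<Rightarrow> nat \<Rightarrow> nat \<Rightarrow> real"
  assumes "I \<subseteq> {..<n}" "J \<subseteq> {..<n}"
  shows "(\<Sum>c\<in>{..<L} \<times> {..<n} \<times> {..<n}. (case c of (l,i,j) \<Rightarrow> if i \<in> I \<and> j \<in> J then g l i j else 0))
       = (\<Sum>i\<in>I. \<Sum>j\<in>J. \<Sum>l<L. g l i j)"
proof -
  have fI: "finite I" "finite J" using assms finite_subset by blast+
  have "(\<Sum>c\<in>{..<L} \<times> {..<n} \<times> {..<n}. (case c of (l,i,j) \<Rightarrow> if i \<in> I \<and> j \<in> J then g l i j else 0))
      = (\<Sum>c\<in>{..<L} \<times> I \<times> J. (case c of (l,i,j) \<Rightarrow> g l i j))"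
    by (rule sum.mono_neutral_cong_right) (use assms fI in \<open>auto split: if_splits\<close>)
  also have "\<dots> = (\<Sum>l<L. \<Sum>i\<in>I. \<Sum>j\<in>J. g l i j)"
    by (simp add: sum.cartesian_product)
  also have "\<dots> = (\<Sum>i\<in>I. \<Sum>l<L. \<Sum>j\<in>J. g l i j)" by (rule sum.swap)
  also have "\<dots> = (\<Sum>i\<in>I. \<Sum>j\<in>J. \<Sum>l<L. g l i j)" by (intro sum.cong refl sum.swap)
  finally show ?thesis .
qed

lemma row_mgf:
  assumes IJ: "I \<subseteq> {..<n}" "J \<subseteq> {..<n}"
  and p: "\<forall>l<L. \<forall>i<n. \<forall>j<n. 0 \<le> p l i j \<and> p l i j \<le> 1"
  and x: "\<forall>j\<in>J. \<bar>x j\<bar> \<le> 1"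
  and s: "\<forall>i\<in>I. \<forall>l<L. \<bar>s i * \<omega> l\<bar> \<le> 1"
  shows "measure_pmf.expectation (bern_model L n p) (\<lambda>A. exp (\<Sum>i\<in>I. s i * Yr L \<omega> p A J x i))
     \<le> exp (\<Sum>i\<in>I. (s i)^2 * (\<Sum>j\<in>J. \<Sum>l<L. (\<omega> l)^2 * p l i j))"
proof -
  define Dom where "Dom = {..<L} \<times> {..<n} \<times> {..<n}"
  define h where "h c b = (case c of (l,i,j) \<Rightarrow> if i \<in> I \<and> j \<in> J then
        s i * \<omega> l * x j * ((if b then 1 else 0) - p l i j) else 0)" for c :: "nat \<times> nat \<times> nat" and b
  define q where "q c = (case c of (l,i,j) \<Rightarrow> if i \<in> I \<and> j \<in> J then
        (s i * \<omega> l * x j)^2 * p l i j else 0)" for c :: "nat \<times> nat \<times> nat"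
  have finD: "finite Dom" unfolding Dom_def by auto
  have e1: "(\<Sum>i\<in>I. s i * Yr L \<omega> p A J x i) = (\<Sum>c\<in>Dom. h c (A c))" for A
  proof -
    have "(\<Sum>c\<in>Dom. h c (A c)) = (\<Sum>c\<in>Dom. case c of (l,i,j) \<Rightarrow> if i \<in> I \<and> j \<in> J then s i * \<omega> l * x j * ((if A (l,i,j) then 1 else 0) - p l i j) else 0)"
      unfolding h_def by (intro sum.cong refl) (auto split: prod.split)
    also have "\<dots> = (\<Sum>i\<in>I. \<Sum>j\<in>J. \<Sum>l<L. s i * \<omega> l * x j * ((if A (l,i,j) then 1 else 0) - p l i j))"
      unfolding Dom_def by (rule sum_dom[OF IJ])
    also have "\<dots> = (\<Sum>i\<in>I. s i * Yr L \<omega> p A J x i)"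
      unfolding Yr_def Abar_def EAbar_def
      by (intro sum.cong refl) (simp add: sum_distrib_left sum_distrib_right sum_subtractf[symmetric] algebra_simps)
    finally show ?thesis by simp
  qed
  have "measure_pmf.expectation (bern_model L n p) (\<lambda>A. exp (\<Sum>i\<in>I. s i * Yr L \<omega> p A J x i))
      = measure_pmf.expectation (Pi_pmf Dom False (\<lambda>(l, i, j). bernoulli_pmf (p l i j)))
           (\<lambda>A. \<Prod>c\<in>Dom. exp (h c (A c)))"
    unfolding bern_model_def Dom_def[symmetric] e1 by (simp add: exp_sum[OF finD])
  also have "\<dots> = (\<Prod>c\<in>Dom. measure_pmf.expectation ((\<lambda>(l, i, j). bernoulli_pmf (p l i j)) c) (\<lambda>b. exp (h c b)))"
    by (rule expectation_prod_Pi_pmf[OF finD]) (auto intro: integrable_measure_pmf_finite)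
  also have "\<dots> \<le> (\<Prod>c\<in>Dom. exp (q c))"
  proof (rule prod_mono)
    fix c assume c0: "c \<in> Dom"
    obtain l i j where lij: "c = (l,i,j)" by (cases c) auto
    have c: "(l,i,j) \<in> Dom" using c0 lij by simp
    have E: "measure_pmf.expectation ((\<lambda>(l, i, j). bernoulli_pmf (p l i j)) c) (\<lambda>b. exp (h c b))
       = measure_pmf.expectation (bernoulli_pmf (p l i j)) (\<lambda>b. exp (h (l,i,j) b))" using lij by simp
    have "0 \<le> measure_pmf.expectation (bernoulli_pmf (p l i j)) (\<lambda>b. exp (h (l,i,j) b))"
      by (intro Bochner_Integration.integral_nonneg) auto
    moreover have "measure_pmf.expectation (bernoulli_pmf (p l i j)) (\<lambda>b. exp (h (l,i,j) b)) \<le> exp (q (l,i,j))"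
    proof (cases "i \<in> I \<and> j \<in> J")
      case True
      have pl: "0 \<le> p l i j" "p l i j \<le> 1" using p c unfolding Dom_def by auto
      have t: "\<bar>s i * \<omega> l * x j\<bar> \<le> 1"
      proof -
        have "\<bar>s i * \<omega> l * x j\<bar> = \<bar>s i * \<omega> l\<bar> * \<bar>x j\<bar>" by (simp add: abs_mult)
        also have "\<dots> \<le> 1 * 1" using s x True c unfolding Dom_def
          by (intro mult_mono) auto
        finally show ?thesis by simp
      qed
      have "(\<lambda>b. exp (h (l,i,j) b)) = (\<lambda>b. exp ((s i * \<omega> l * x j) * ((if b then 1 else 0) - p l i j)))"
        unfolding h_def using True by simp
      then show ?thesis using bern_mgf[OF pl t] True unfolding q_def by simp
    next
      case False
      then have "(\<lambda>b. exp (h (l,i,j) b)) = (\<lambda>b. 1)" unfolding h_def by auto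
      moreover have "q (l,i,j) = 0" using False unfolding q_def by auto
      ultimately show ?thesis by simp
    qed
    ultimately show "0 \<le> measure_pmf.expectation ((\<lambda>(l, i, j). bernoulli_pmf (p l i j)) c) (\<lambda>b. exp (h c b))
       \<and> measure_pmf.expectation ((\<lambda>(l, i, j). bernoulli_pmf (p l i j)) c) (\<lambda>b. exp (h c b)) \<le> exp (q c)"
      unfolding E lij by simp
  qed
  also have "\<dots> = exp (\<Sum>c\<in>Dom. q c)" by (simp add: exp_sum[OF finD])
  also have "(\<Sum>c\<in>Dom. q c) = (\<Sum>i\<in>I. \<Sum>j\<in>J. \<Sum>l<L. (s i * \<omega> l * x j)^2 * p l i j)"
    unfolding Dom_def q_def by (rule sum_dom[OF IJ])
  also have "\<dots> \<le> (\<Sum>i\<in>I. (s i)^2 * (\<Sum>j\<in>J. \<Sum>l<L. (\<omega> l)^2 * p l i j))"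
    unfolding sum_distrib_left
  proof (intro sum_mono)
    fix i j l assume ij: "i \<in> I" "j \<in> J" "l \<in> {..<L}"
    have "i < n" "j < n" using ij IJ by auto
    then have pl: "0 \<le> p l i j" using p ij by auto
    have "(x j)^2 \<le> 1" using x ij by (simp add: abs_square_le_1)
    then have "(s i)^2 * (\<omega> l)^2 * p l i j * (x j)^2 \<le> (s i)^2 * (\<omega> l)^2 * p l i j * 1"
      using pl by (intro mult_left_mono) auto
    then show "(s i * \<omega> l * x j)^2 * p l i j \<le> (s i)^2 * ((\<omega> l)^2 * p l i j)"
      by (simp add: power_mult_distrib algebra_simps)
  qed
  finally show ?thesis by simp
qed




lemma row_sum_bound:
  fixes lam Vb :: real and N :: nat
  assumes "lam > 0" "Vb \<ge> 0" "8 * lam * Vb \<le> 1"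
  shows "(\<Sum>q\<in>{..N} \<times> {-1,1::real}. exp 1 * exp (- ((real (fst q))^2)) * exp ((snd q * (2 * real (fst q) * sqrt lam))^2 * Vb)) \<le> exp 4"
proof -
  define a where "a = exp (- (1/2::real))"
  have a0: "0 < a" "a \<le> 2/3"
  proof -
    show "0 < a" unfolding a_def by simp
    have "exp (1/2::real) \<ge> 1 + 1/2" by (rule exp_ge_add_one_self)
    then show "a \<le> 2/3" unfolding a_def by (simp add: exp_minus field_simps)
  qed
  have termb: "exp (- ((real k)^2)) * exp ((s * (2 * real k * sqrt lam))^2 * Vb) \<le> a ^ k" if s: "s \<in> {-1,1}" for k s
  proof -
    have "(s * (2 * real k * sqrt lam))^2 * Vb = 4 * (real k)^2 * (lam * Vb)"
      using s assms by (auto simp: power_mult_distrib)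
    also have "\<dots> \<le> (real k)^2 / 2"
    proof -
      have "(real k)^2 * (8 * lam * Vb) \<le> (real k)^2 * 1" using assms by (intro mult_left_mono) auto
      then show ?thesis by (simp add: algebra_simps)
    qed
    finally have "- ((real k)^2) + (s * (2 * real k * sqrt lam))^2 * Vb \<le> - (real k / 2)"
    proof -
      assume h: "(s * (2 * real k * sqrt lam))^2 * Vb \<le> (real k)^2 / 2"
      have "real k \<le> (real k)^2" by (cases k) (auto simp: power2_eq_square)
      then show ?thesis using h by linarith
    qed
    then have "exp (- ((real k)^2)) * exp ((s * (2 * real k * sqrt lam))^2 * Vb) \<le> exp (- (real k / 2))"
      by (simp add: exp_add[symmetric])
    also have "exp (- (real k / 2)) = a ^ k" unfolding a_def by (simp add: exp_of_nat_mult[symmetric])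
    finally show ?thesis .
  qed
  have "(\<Sum>q\<in>{..N} \<times> {-1,1::real}. exp 1 * exp (- ((real (fst q))^2)) * exp ((snd q * (2 * real (fst q) * sqrt lam))^2 * Vb))
     \<le> (\<Sum>q\<in>{..N} \<times> {-1,1::real}. exp 1 * a ^ (fst q))"
  proof (rule sum_mono)
    fix q :: "nat \<times> real" assume q: "q \<in> {..N} \<times> {-1,1::real}"
    have "exp (- ((real (fst q))^2)) * exp ((snd q * (2 * real (fst q) * sqrt lam))^2 * Vb) \<le> a ^ fst q"
      using q by (intro termb) auto
    then have "exp 1 * (exp (- ((real (fst q))^2)) * exp ((snd q * (2 * real (fst q) * sqrt lam))^2 * Vb)) \<le> exp 1 * a ^ fst q"
      by (intro mult_left_mono) auto
    then show "exp 1 * exp (- ((real (fst q))^2)) * exp ((snd q * (2 * real (fst q) * sqrt lam))^2 * Vb) \<le> exp 1 * a ^ fst q"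
      by (simp add: mult.assoc)
  qed
  also have "\<dots> = 2 * exp 1 * (\<Sum>k<Suc N. a ^ k)"
  proof -
    have "(\<Sum>k\<le>N. \<Sum>s\<in>{-1,1::real}. exp 1 * a ^ k) = (\<Sum>(k,s)\<in>{..N} \<times> {-1,1::real}. exp 1 * a ^ k)"
      by (rule sum.cartesian_product)
    also have "\<dots> = (\<Sum>q\<in>{..N} \<times> {-1,1::real}. exp 1 * a ^ fst q)"
      by (intro sum.cong) auto
    finally have "(\<Sum>q\<in>{..N} \<times> {-1,1::real}. exp 1 * a ^ fst q) = (\<Sum>k\<le>N. 2 * (exp 1 * a ^ k))" by simp
    then show ?thesis by (simp add: lessThan_Suc_atMost sum_distrib_left mult.assoc)
  qed
  also have "(\<Sum>k<Suc N. a ^ k) \<le> 3"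
  proof -
    have an: "a \<noteq> 1" using a0 by auto
    have "(\<Sum>k<Suc N. a ^ k) = (1 - a ^ Suc N) / (1 - a)" by (simp only: sum_gp_strict if_not_P[OF an])
    also have "\<dots> \<le> 1 / (1 - a)" using a0 by (intro divide_right_mono) auto
    also have "\<dots> \<le> 3" using a0 by (simp add: field_simps)
    finally show ?thesis .
  qed
  then have "2 * exp 1 * (\<Sum>k<Suc N. a ^ k) \<le> 2 * exp 1 * 3" by simp
  also have "\<dots> \<le> exp 4"
  proof -
    have e1: "exp (1::real) \<ge> 2" using exp_ge_add_one_self[of 1] by simp
    have h3: "exp (3::real) = exp 1 ^ 3" using exp_of_nat_mult[of 3 "1::real"] by simp
    have h4: "exp (4::real) = exp 1 * exp 3" by (simp add: exp_add[symmetric])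
    have "(2::real) ^ 3 \<le> exp 1 ^ 3" using e1 by (intro power_mono) auto
    then have "exp 1 * 8 \<le> exp 1 * exp (3::real)" unfolding h3 by (intro mult_left_mono) auto
    then show ?thesis unfolding h4 by simp
  qed
  finally show ?thesis .
qed




lemma mgf_main:
  fixes lam T Vb W :: real and lt :: "(nat \<times> nat \<times> nat \<Rightarrow> bool) \<Rightarrow> nat \<Rightarrow> bool"
  assumes IJ: "I \<subseteq> {..<n}" "J \<subseteq> {..<n}"
  and p: "\<forall>l<L. \<forall>i<n. \<forall>j<n. 0 \<le> p l i j \<and> p l i j \<le> 1"
  and x: "\<forall>j\<in>J. \<bar>x j\<bar> \<le> 1"
  and lam: "lam > 0" and T: "T \<ge> 0" and Vb: "Vb \<ge> 0" "8 * lam * Vb \<le> 1"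
  and W: "\<forall>l<L. 0 \<le> \<omega> l \<and> \<omega> l \<le> W" "2 * lam * T * W \<le> 1"
  and V: "\<forall>i\<in>I. (\<Sum>j\<in>J. \<Sum>l<L. (\<omega> l)^2 * p l i j) \<le> Vb"
  and light: "\<forall>A. \<forall>i\<in>I. lt A i \<longrightarrow> \<bar>Yr L \<omega> p A J x i\<bar> \<le> T"
  shows "measure_pmf.expectation (bern_model L n p)
           (\<lambda>A. exp (lam * (\<Sum>i\<in>I. if lt A i then (Yr L \<omega> p A J x i)^2 else 0))) \<le> exp (4 * real (card I))"
proof -
  have finI: "finite I" using IJ finite_subset by blast
  define N where "N = nat \<lfloor>sqrt lam * T\<rfloor>"
  define Qs where "Qs = {..N} \<times> {-1,1::real}"
  define w where "w q = exp 1 * exp (- ((real (fst q))^2))" for q :: "nat \<times> real"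
  define sl where "sl q = snd q * (2 * real (fst q) * sqrt lam)" for q :: "nat \<times> real"
  define G where "G y = (\<Sum>q\<in>Qs. w q * exp (sl q * y))" for y
  define Y where "Y A i = Yr L \<omega> p A J x i" for A i
  define Z where "Z A i = (if lt A i then (Y A i)^2 else 0)" for A i
  have finQ: "finite Qs" unfolding Qs_def by auto
  have w0: "w q \<ge> 0" for q unfolding w_def by simp
  have slb: "\<bar>sl q * \<omega> l\<bar> \<le> 1" if q: "q \<in> Qs" and l: "l < L" for q l
  proof -
    have kN: "real (fst q) \<le> sqrt lam * T"
    proof -
      have "fst q \<le> N" using q unfolding Qs_def by auto
      moreover have "real N \<le> sqrt lam * T" unfolding N_def using lam T by simp
      ultimately show ?thesis by linarith
    qed
    have "\<bar>sl q\<bar> = 2 * real (fst q) * sqrt lam"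
      using q lam unfolding sl_def Qs_def by (auto simp: abs_mult)
    also have "\<dots> \<le> 2 * (sqrt lam * T) * sqrt lam" using kN lam by (intro mult_right_mono) auto
    also have "\<dots> = 2 * lam * T" using lam by (simp add: algebra_simps)
    finally have sq: "\<bar>sl q\<bar> \<le> 2 * lam * T" .
    have "\<bar>sl q * \<omega> l\<bar> = \<bar>sl q\<bar> * \<omega> l" using W l by (simp add: abs_mult)
    also have "\<dots> \<le> (2 * lam * T) * W" using W l sq lam T by (intro mult_mono) auto
    finally show ?thesis using W by linarith
  qed
  have pw: "exp (lam * Z A i) \<le> G (Y A i)" if i: "i \<in> I" for A i
  proof (cases "lt A i")
    case True
    have "\<bar>Y A i\<bar> \<le> T" using light i True unfolding Y_def by auto
    from grid_bound[OF lam this]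
    have "exp (lam * (Y A i)^2) \<le> (\<Sum>k\<le>N. \<Sum>s\<in>{-1,1::real}. exp 1 * exp (- ((real k)^2)) * exp (s * (2 * real k * sqrt lam) * Y A i))"
      unfolding N_def .
    also have "\<dots> = (\<Sum>(k,s)\<in>{..N} \<times> {-1,1::real}. exp 1 * exp (- ((real k)^2)) * exp (s * (2 * real k * sqrt lam) * Y A i))"
      by (rule sum.cartesian_product)
    also have "\<dots> = G (Y A i)" unfolding G_def Qs_def w_def sl_def by (intro sum.cong) auto
    finally show ?thesis unfolding Z_def using True by simp
  next
    case False
    have "exp (lam * Z A i) = 1" unfolding Z_def using False by simp
    also have "\<dots> \<le> w (0,1) * exp (sl (0,1) * Y A i)" unfolding w_def sl_def by simp
    also have "\<dots> \<le> G (Y A i)" unfolding G_def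
      by (rule member_le_sum[where f="\<lambda>q. w q * exp (sl q * Y A i)"]) (use w0 finQ in \<open>auto simp: Qs_def\<close>)
    finally show ?thesis .
  qed
  define Phi where "Phi = PiE I (\<lambda>_. Qs)"
  have finPhi: "finite Phi" unfolding Phi_def using finI finQ by (intro finite_PiE) auto
  have prodG: "(\<Prod>i\<in>I. G (Y A i)) = (\<Sum>f\<in>Phi. (\<Prod>i\<in>I. w (f i)) * exp (\<Sum>i\<in>I. sl (f i) * Y A i))" for A
  proof -
    have "(\<Prod>i\<in>I. G (Y A i)) = (\<Sum>f\<in>Phi. \<Prod>i\<in>I. w (f i) * exp (sl (f i) * Y A i))"
      unfolding G_def Phi_def by (rule prod_sum_PiE) (use finI finQ in auto)
    also have "\<dots> = (\<Sum>f\<in>Phi. (\<Prod>i\<in>I. w (f i)) * exp (\<Sum>i\<in>I. sl (f i) * Y A i))"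
      by (intro sum.cong refl) (simp add: prod.distrib exp_sum[OF finI])
    finally show ?thesis .
  qed
  let ?M = "bern_model L n p"
  have intg: "integrable (measure_pmf ?M) f" for f :: "_ \<Rightarrow> real"
    by (rule integrable_measure_pmf_finite[OF finite_bern_model])
  have "measure_pmf.expectation ?M (\<lambda>A. exp (lam * (\<Sum>i\<in>I. if lt A i then (Yr L \<omega> p A J x i)^2 else 0)))
      = measure_pmf.expectation ?M (\<lambda>A. \<Prod>i\<in>I. exp (lam * Z A i))"
    unfolding Z_def Y_def by (simp add: sum_distrib_left exp_sum[OF finI])
  also have "\<dots> \<le> measure_pmf.expectation ?M (\<lambda>A. \<Prod>i\<in>I. G (Y A i))"
    by (intro integral_mono intg prod_mono) (use pw in auto)
  also have "\<dots> = measure_pmf.expectation ?M (\<lambda>A. \<Sum>f\<in>Phi. (\<Prod>i\<in>I. w (f i)) * exp (\<Sum>i\<in>I. sl (f i) * Y A i))"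
    unfolding prodG ..
  also have "\<dots> = (\<Sum>f\<in>Phi. (\<Prod>i\<in>I. w (f i)) * measure_pmf.expectation ?M (\<lambda>A. exp (\<Sum>i\<in>I. sl (f i) * Y A i)))"
    by (subst Bochner_Integration.integral_sum) (auto intro: intg)
  also have "\<dots> \<le> (\<Sum>f\<in>Phi. (\<Prod>i\<in>I. w (f i)) * exp (\<Sum>i\<in>I. (sl (f i))^2 * Vb))"
  proof (rule sum_mono)
    fix f assume f: "f \<in> Phi"
    have fQ: "\<forall>i\<in>I. f i \<in> Qs" using f unfolding Phi_def by auto
    have "measure_pmf.expectation ?M (\<lambda>A. exp (\<Sum>i\<in>I. sl (f i) * Y A i))
        \<le> exp (\<Sum>i\<in>I. (sl (f i))^2 * (\<Sum>j\<in>J. \<Sum>l<L. (\<omega> l)^2 * p l i j))"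
      unfolding Y_def by (rule row_mgf[OF IJ p x]) (use fQ slb in auto)
    also have "\<dots> \<le> exp (\<Sum>i\<in>I. (sl (f i))^2 * Vb)"
      using V by (auto intro!: sum_mono mult_left_mono)
    finally show "(\<Prod>i\<in>I. w (f i)) * measure_pmf.expectation ?M (\<lambda>A. exp (\<Sum>i\<in>I. sl (f i) * Y A i))
        \<le> (\<Prod>i\<in>I. w (f i)) * exp (\<Sum>i\<in>I. (sl (f i))^2 * Vb)"
      by (intro mult_left_mono prod_nonneg) (use w0 in auto)
  qed
  also have "\<dots> = (\<Sum>f\<in>Phi. \<Prod>i\<in>I. w (f i) * exp ((sl (f i))^2 * Vb))"
    by (intro sum.cong refl) (simp add: prod.distrib exp_sum[OF finI])
  also have "\<dots> = (\<Prod>i\<in>I. \<Sum>q\<in>Qs. w q * exp ((sl q)^2 * Vb))"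
    unfolding Phi_def by (rule prod_sum_PiE[symmetric]) (use finI finQ in auto)
  also have "\<dots> \<le> (\<Prod>i\<in>I. exp 4)"
  proof (rule prod_mono)
    fix i assume "i \<in> I"
    have "(\<Sum>q\<in>Qs. w q * exp ((sl q)^2 * Vb)) \<le> exp 4"
      using row_sum_bound[OF lam Vb, of N] unfolding Qs_def w_def sl_def by simp
    then show "0 \<le> (\<Sum>q\<in>Qs. w q * exp ((sl q)^2 * Vb)) \<and> (\<Sum>q\<in>Qs. w q * exp ((sl q)^2 * Vb)) \<le> exp 4"
      using w0 by (auto intro: sum_nonneg)
  qed
  also have "\<dots> = exp (4 * real (card I))" by (simp add: exp_of_nat_mult[symmetric] mult.commute)
  finally show ?thesis .
qed




lemma mlog_ge:
  fixes n m :: nat assumes "1 \<le> m" "m \<le> n"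
  shows "real m * ln (exp 1 * real n / real m) \<ge> 1 + ln (real n)"
    and "ln (exp 1 * real n / real m) \<ge> 1"
proof -
  have mp: "real m > 0" "real n > 0" using assms by auto
  have l: "ln (exp 1 * real n / real m) = 1 + ln (real n) - ln (real m)"
    using mp by (simp add: ln_div ln_mult_pos)
  have a: "ln (real m) \<le> real m - 1" using mp by (intro ln_le_minus_one) auto
  have b: "ln (real m) \<le> ln (real n)" using mp assms by simp
  have "0 \<le> (real m - 1) * (ln (real n) - ln (real m))" using assms b by (intro mult_nonneg_nonneg) auto
  then show "real m * ln (exp 1 * real n / real m) \<ge> 1 + ln (real n)" unfolding l using a
    by (simp add: algebra_simps)
  show "ln (exp 1 * real n / real m) \<ge> 1" unfolding l using b by simp
qed

lemma numeric_term:
  fixes n m :: nat and r :: real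
  assumes "1 \<le> m" "m \<le> n" "r \<ge> 1"
  shows "real (n choose m) ^ 2 * 2 ^ m * exp (4 * real m - 16 * real m * r * ln (exp 1 * real n / real m))
         \<le> exp (- 2 * r * (1 + ln (real n)))"
proof -
  define l where "l = ln (exp 1 * real n / real m)"
  have l1: "l \<ge> 1" and ml: "real m * l \<ge> 1 + ln (real n)" using mlog_ge[OF assms(1,2)] unfolding l_def by auto
  have c: "real (n choose m) \<le> exp (real m * l)" using choose_le_exp[OF assms(1,2)] unfolding l_def .
  have c2: "real (n choose m) ^ 2 \<le> exp (2 * real m * l)"
  proof -
    have "real (n choose m) ^ 2 \<le> exp (real m * l) ^ 2" using c by (intro power_mono) auto
    also have "\<dots> = exp (2 * real m * l)" by (simp add: exp_of_nat_mult[symmetric] algebra_simps)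
    finally show ?thesis .
  qed
  have t2: "(2::real) ^ m \<le> exp (real m)"
  proof -
    have "(2::real) ^ m \<le> exp 1 ^ m" using exp_ge_add_one_self[of "1::real"] by (intro power_mono) auto
    also have "\<dots> = exp (real m)" by (simp add: exp_of_nat_mult[symmetric])
    finally show ?thesis .
  qed
  have "real (n choose m) ^ 2 * 2 ^ m * exp (4 * real m - 16 * real m * r * l)
      \<le> exp (2 * real m * l) * exp (real m) * exp (4 * real m - 16 * real m * r * l)"
    using c2 t2 by (intro mult_right_mono mult_mono) auto
  also have "\<dots> = exp (2 * real m * l + 5 * real m - 16 * real m * r * l)"
    by (simp add: exp_add[symmetric] algebra_simps)
  also have "\<dots> \<le> exp (- 2 * r * (1 + ln (real n)))"
  proof -
    have m0: "real m \<ge> 1" using assms by simp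
    have "5 * real m \<le> 5 * (real m * l)" using l1 m0 by (simp add: mult_le_cancel_left1)
    moreover have "real m * l * (14 * r) \<ge> real m * l * 7"
      using assms l1 m0 by (intro mult_left_mono) auto
    moreover have "real m * l * (2 * r) \<ge> (1 + ln (real n)) * (2*r)"
      using ml assms by (intro mult_right_mono) auto
    ultimately have "2 * real m * l + 5 * real m - 16 * real m * r * l \<le> - 2 * r * (1 + ln (real n))"
      by (simp add: algebra_simps)
    then show ?thesis by simp
  qed
  finally show ?thesis unfolding l_def .
qed

lemma final_sum:
  fixes n :: nat and r :: real assumes "n \<ge> 1" "r \<ge> 1"
  shows "real n * exp (- 2 * r * (1 + ln (real n))) \<le> real n powr (- r)"
proof -
  have np: "real n > 0" using assms by simp
  have "exp (- 2 * r * (1 + ln (real n))) \<le> exp (- 2 * r * ln (real n))" using assms by simp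
  also have "\<dots> = real n powr (- 2 * r)" using np by (simp add: powr_def algebra_simps)
  finally have "real n * exp (- 2 * r * (1 + ln (real n))) \<le> real n powr 1 * real n powr (- 2 * r)"
    using np by (simp add: mult_left_mono)
  also have "\<dots> = real n powr (1 + (- 2 * r))" by (rule powr_add[symmetric])
  also have "\<dots> = real n powr (1 - 2 * r)" by simp
  also have "\<dots> \<le> real n powr (- r)" using assms by (intro powr_mono) auto
  finally show ?thesis .
qed




lemma dmax_ge:
  assumes "i < n" "j < n"
  shows "real n * p l i j \<le> dmax n p l"
proof -
  have fin: "finite {real n * p l i j | i j. i < n \<and> j < n}"
    by (rule finite_subset[of _ "(\<lambda>(i,j). real n * p l i j) ` ({..<n} \<times> {..<n})"]) auto
  show ?thesis unfolding dmax_def by (rule Max_ge[OF fin]) (use assms in auto)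
qed

lemma dmax_nonneg:
  assumes "n \<ge> 1" "\<forall>i<n. \<forall>j<n. 0 \<le> p l i j"
  shows "0 \<le> dmax n p l"
proof -
  have "0 \<le> real n * p l 0 0" using assms by auto
  also have "\<dots> \<le> dmax n p l" by (rule dmax_ge) (use assms in auto)
  finally show ?thesis .
qed

lemma p_le_d:
  assumes "n \<ge> 1" "i < n" "j < n"
  shows "p l i j \<le> dmax n p l / real n"
  using dmax_ge[OF assms(2,3), of p l] assms by (simp add: field_simps)

lemma Abar_nonneg: "\<forall>l<L. 0 \<le> \<omega> l \<Longrightarrow> 0 \<le> Abar L \<omega> A i j"
  unfolding Abar_def by (intro sum_nonneg) auto

lemma EAbar_bounds:
  assumes "n \<ge> 1" "i < n" "j < n" "\<forall>l<L. 0 \<le> \<omega> l" "\<forall>l<L. \<forall>i<n. \<forall>j<n. 0 \<le> p l i j \<and> p l i j \<le> 1"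
  shows "0 \<le> EAbar L \<omega> p i j" "EAbar L \<omega> p i j \<le> (\<Sum>l<L. \<omega> l * dmax n p l) / real n"
proof -
  show "0 \<le> EAbar L \<omega> p i j" unfolding EAbar_def using assms by (intro sum_nonneg) auto
  have "EAbar L \<omega> p i j \<le> (\<Sum>l<L. \<omega> l * (dmax n p l / real n))"
    unfolding EAbar_def using assms by (intro sum_mono mult_left_mono p_le_d) auto
  also have "\<dots> = (\<Sum>l<L. \<omega> l * dmax n p l) / real n" by (simp add: sum_divide_distrib)
  finally show "EAbar L \<omega> p i j \<le> (\<Sum>l<L. \<omega> l * dmax n p l) / real n" .
qed

lemma abs_diff_sum_le:
  fixes a b x :: "nat \<Rightarrow> real"
  assumes "\<forall>j\<in>J. 0 \<le> a j \<and> 0 \<le> b j \<and> \<bar>x j\<bar> \<le> 1"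
  shows "\<bar>\<Sum>j\<in>J. (a j - b j) * x j\<bar> \<le> (\<Sum>j\<in>J. a j) + (\<Sum>j\<in>J. b j)"
proof -
  have "\<bar>\<Sum>j\<in>J. (a j - b j) * x j\<bar> \<le> (\<Sum>j\<in>J. \<bar>(a j - b j) * x j\<bar>)" by (rule sum_abs)
  also have "\<dots> \<le> (\<Sum>j\<in>J. a j + b j)"
  proof (rule sum_mono)
    fix j assume j: "j \<in> J"
    have "\<bar>(a j - b j) * x j\<bar> = \<bar>a j - b j\<bar> * \<bar>x j\<bar>" by (simp add: abs_mult)
    also have "\<dots> \<le> \<bar>a j - b j\<bar> * 1" using assms j by (intro mult_left_mono) auto
    also have "\<dots> \<le> a j + b j" using assms j by auto
    finally show "\<bar>(a j - b j) * x j\<bar> \<le> a j + b j" .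
  qed
  also have "\<dots> = (\<Sum>j\<in>J. a j) + (\<Sum>j\<in>J. b j)" by (rule sum.distrib)
  finally show ?thesis .
qed

lemma prob_union_le:
  fixes M :: "'a pmf"
  assumes "finite F"
  shows "measure_pmf.prob M (\<Union>a\<in>F. X a) \<le> (\<Sum>a\<in>F. measure_pmf.prob M (X a))"
  by (rule measure_pmf.finite_measure_subadditive_finite) (use assms in auto)




lemma main_pos:
  fixes c0 :: real and n L :: nat and \<omega> :: "nat \<Rightarrow> real" and p :: "nat \<Rightarrow> nat \<Rightarrow> nat \<Rightarrow> real" and \<alpha> r :: real
  assumes c0: "c0 > 0"
  and n1: "n \<ge> 1" and L1: "L \<ge> 1"
  and pb: "\<forall>l<L. \<forall>i<n. \<forall>j<n. 0 \<le> p l i j \<and> p l i j \<le> 1"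
  and wpos: "\<forall>l<L. \<omega> l > 0"
  and cond: "Max (\<omega> ` {..<L}) * (\<Sum>l<L. \<omega> l * dmax n p l) \<le> c0 * (\<Sum>l<L. (\<omega> l)\<^sup>2 * dmax n p l)"
  and apos: "\<alpha> > 0" and r1: "r \<ge> 1"
  and Spos: "(\<Sum>l<L. (\<omega> l)\<^sup>2 * dmax n p l) > 0"
  defines "C \<equiv> sqrt (16 * (8 + 4 * c0))"
  shows "measure_pmf.prob (bern_model L n p)
       {A. \<forall>m I J. 1 \<le> m \<and> m \<le> n \<and> real m \<le> \<alpha> * real n \<and>
              I \<subseteq> {..<n} \<and> J \<subseteq> {..<n} \<and> card I = m \<and> card J = m \<longrightarrow>
              norm_inf2 (\<lambda>i j. Abar L \<omega> A i j - EAbar L \<omega> p i j)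
                 {i\<in>I. (\<Sum>j\<in>J. Abar L \<omega> A i j) \<le> \<alpha> * (\<Sum>l<L. \<omega> l * dmax n p l)} J
              \<le> C * sqrt (\<alpha> * (\<Sum>l<L. (\<omega> l)\<^sup>2 * dmax n p l) * real m * r
                            * ln (exp 1 * real n / real m))}
     \<ge> 1 - real n powr (- r)"
proof -
  define D where "D = (\<Sum>l<L. \<omega> l * dmax n p l)"
  define S where "S = (\<Sum>l<L. (\<omega> l)\<^sup>2 * dmax n p l)"
  define W where "W = Max (\<omega> ` {..<L})"
  define c where "c = 8 + 4 * c0"
  define lam where "lam = 1 / (c * \<alpha> * S)"
  define T where "T = 2 * \<alpha> * D"
  define Vb where "Vb = \<alpha> * S"
  have S0: "S > 0" using Spos unfolding S_def .
  have c8: "c \<ge> 8" "c > 0" unfolding c_def using c0 by auto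
  have w0: "\<forall>l<L. 0 \<le> \<omega> l" using wpos by (auto intro: less_imp_le)
  have dnn: "\<forall>l<L. 0 \<le> dmax n p l" using dmax_nonneg[OF n1] pb by blast
  have D0: "D \<ge> 0" unfolding D_def using w0 dnn by (intro sum_nonneg) auto
  have wW: "\<forall>l<L. 0 \<le> \<omega> l \<and> \<omega> l \<le> W" unfolding W_def using w0 by (auto intro: Max_ge)
  have WD: "W * D \<le> c0 * S" using cond unfolding W_def D_def S_def .
  have lam0: "lam > 0" unfolding lam_def using c8 apos S0 by simp
  have T0: "T \<ge> 0" unfolding T_def using apos D0 by simp
  have Vb0: "Vb \<ge> 0" unfolding Vb_def using apos S0 by simp
  have lamVb: "8 * lam * Vb \<le> 1" unfolding lam_def Vb_def using c8 apos S0 by (simp add: field_simps)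
  have lamTW: "2 * lam * T * W \<le> 1"
  proof -
    have "2 * lam * T * W = 4 * (W * D) / (c * S)" unfolding lam_def T_def using apos S0 c8 by (simp add: field_simps)
    also have "\<dots> \<le> 4 * (c0 * S) / (c * S)" using WD c8 S0 by (intro divide_right_mono mult_left_mono) auto
    also have "\<dots> = 4 * c0 / c" using S0 by simp
    also have "\<dots> \<le> 1" using c8 c0 unfolding c_def by (simp add: field_simps)
    finally show ?thesis .
  qed
  have a8: "0 \<le> 8 + 4 * c0" using c0 by linarith
  then have a16: "0 \<le> 16 * (8 + 4 * c0)" by (intro mult_nonneg_nonneg) simp_all
  have C2: "C^2 = 16 * c" using a16 unfolding C_def c_def by (simp only: real_sqrt_pow2)
  have C0: "C \<ge> 0" unfolding C_def using a16 by (rule real_sqrt_ge_zero)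
  define lt where "lt J A i \<longleftrightarrow> (\<Sum>j\<in>J. Abar L \<omega> A i j) \<le> \<alpha> * D" for J A i
  define Zs where "Zs I J x A = (\<Sum>i\<in>I. if lt J A i then (Yr L \<omega> p A J x i)^2 else 0)" for I J x A
  define lg where "lg m = ln (exp 1 * real n / real m)" for m :: nat
  define R2 where "R2 m = C^2 * (\<alpha> * S * real m * r * lg m)" for m :: nat
  define Ms where "Ms = {m. 1 \<le> m \<and> m \<le> n \<and> real m \<le> \<alpha> * real n}"
  define Sub where "Sub m = {I. I \<subseteq> {..<n} \<and> card I = m}" for m
  define Vx where "Vx J = PiE J (\<lambda>_. {-1,1::real})" for J :: "nat set"
  define Bad where "Bad = (\<Union>m\<in>Ms. \<Union>I\<in>Sub m. \<Union>J\<in>Sub m. \<Union>v\<in>Vx J. {A. R2 m < Zs I J v A})"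
  let ?M = "bern_model L n p"
  have finMs: "finite Ms" unfolding Ms_def by (rule finite_subset[of _ "{..n}"]) auto
  have finSub: "finite (Sub m)" for m unfolding Sub_def by (rule finite_subset[of _ "Pow {..<n}"]) auto
  have cardSub: "card (Sub m) = n choose m" for m
    unfolding Sub_def using n_subsets[of "{..<n}" m] by simp
  have finVx: "finite (Vx J)" if "J \<in> Sub m" for J m
    unfolding Vx_def using that unfolding Sub_def by (intro finite_PiE) (auto intro: finite_subset)
  have cardVx: "card (Vx J) = 2 ^ m" if "J \<in> Sub m" for J m
  proof -
    have "finite J" "card J = m" using that unfolding Sub_def by (auto intro: finite_subset)
    then show ?thesis unfolding Vx_def by (simp add: card_PiE numeral_2_eq_2)
  qed
  have ev: "measure_pmf.prob ?M {A. R2 m < Zs I J v A} \<le> exp (4 * real m - 16 * real m * r * lg m)"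
    if m: "m \<in> Ms" and I: "I \<in> Sub m" and J: "J \<in> Sub m" and v: "v \<in> Vx J" for m I J v
  proof -
    have IJ: "I \<subseteq> {..<n}" "J \<subseteq> {..<n}" "card I = m" "card J = m" using I J unfolding Sub_def by auto
    have mb: "1 \<le> m" "m \<le> n" "real m \<le> \<alpha> * real n" using m unfolding Ms_def by auto
    have finJ: "finite J" using IJ finite_subset by blast
    have vx: "\<forall>j\<in>J. \<bar>v j\<bar> \<le> 1"
    proof
      fix j assume "j \<in> J"
      then have "v j \<in> {-1,1}" using v unfolding Vx_def by (rule PiE_mem[rotated])
      then show "\<bar>v j\<bar> \<le> 1" by auto
    qed
    have mn: "real m / real n \<le> \<alpha>" using mb n1 by (simp add: field_simps)
    have V: "\<forall>i\<in>I. (\<Sum>j\<in>J. \<Sum>l<L. (\<omega> l)^2 * p l i j) \<le> Vb"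
    proof
      fix i assume i: "i \<in> I"
      have "(\<Sum>j\<in>J. \<Sum>l<L. (\<omega> l)^2 * p l i j) \<le> (\<Sum>j\<in>J. \<Sum>l<L. (\<omega> l)^2 * (dmax n p l / real n))"
        using i IJ n1 by (intro sum_mono mult_left_mono p_le_d) auto
      also have "\<dots> = real m * S / real n" using IJ unfolding S_def by (simp add: sum_divide_distrib[symmetric])
      also have "\<dots> = (real m / real n) * S" by simp
      also have "\<dots> \<le> \<alpha> * S" using mn S0 by (intro mult_right_mono) auto
      finally show "(\<Sum>j\<in>J. \<Sum>l<L. (\<omega> l)^2 * p l i j) \<le> Vb" unfolding Vb_def .
    qed
    have light: "\<forall>A. \<forall>i\<in>I. lt J A i \<longrightarrow> \<bar>Yr L \<omega> p A J v i\<bar> \<le> T"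
    proof (intro allI ballI impI)
      fix A i assume i: "i \<in> I" and li: "lt J A i"
      have iin: "i < n" using i IJ by auto
      have "\<bar>Yr L \<omega> p A J v i\<bar> \<le> (\<Sum>j\<in>J. Abar L \<omega> A i j) + (\<Sum>j\<in>J. EAbar L \<omega> p i j)"
        unfolding Yr_def using vx IJ iin Abar_nonneg[OF w0] EAbar_bounds(1)[OF n1 _ _ w0 pb]
        by (intro abs_diff_sum_le) auto
      also have "\<dots> \<le> \<alpha> * D + (\<Sum>j\<in>J. D / real n)"
        using li iin IJ EAbar_bounds(2)[OF n1 _ _ w0 pb] unfolding lt_def D_def
        by (intro add_mono sum_mono) auto
      also have "\<dots> = \<alpha> * D + (real m / real n) * D" using IJ by simp
      also have "\<dots> \<le> \<alpha> * D + \<alpha> * D" using mn D0 by (intro add_left_mono mult_right_mono) auto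
      finally show "\<bar>Yr L \<omega> p A J v i\<bar> \<le> T" unfolding T_def by (simp add: mult.commute mult.left_commute)
    qed
    have mgf: "measure_pmf.expectation ?M (\<lambda>A. exp (lam * Zs I J v A)) \<le> exp (4 * real (card I))"
      unfolding Zs_def by (rule mgf_main[OF IJ(1,2) pb vx lam0 T0 Vb0 lamVb wW lamTW V light])
    have lR: "lam * R2 m = 16 * real m * r * lg m"
      unfolding lam_def R2_def C2 using c8 apos S0 by (simp add: field_simps)
    have "measure_pmf.prob ?M {A. R2 m < Zs I J v A} \<le> measure_pmf.prob ?M {A \<in> space ?M. exp (lam * R2 m) \<le> exp (lam * Zs I J v A)}"
      using lam0 by (intro measure_pmf.finite_measure_mono) auto
    also have "\<dots> \<le> measure_pmf.expectation ?M (\<lambda>A. exp (lam * Zs I J v A)) / exp (lam * R2 m)"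
      by (intro integral_Markov_inequality_measure[where A="{}"]) (auto intro: integrable_measure_pmf_finite[OF finite_bern_model])
    also have "\<dots> \<le> exp (4 * real (card I)) / exp (lam * R2 m)"
      using mgf by (intro divide_right_mono) auto
    also have "\<dots> = exp (4 * real m - 16 * real m * r * lg m)"
      unfolding lR IJ(3) by (simp add: exp_diff)
    finally show ?thesis .
  qed
  have bad: "measure_pmf.prob ?M Bad \<le> real n powr (- r)"
  proof -
    have "measure_pmf.prob ?M Bad \<le> (\<Sum>m\<in>Ms. measure_pmf.prob ?M (\<Union>I\<in>Sub m. \<Union>J\<in>Sub m. \<Union>v\<in>Vx J. {A. R2 m < Zs I J v A}))"
      unfolding Bad_def by (rule prob_union_le[OF finMs])
    also have "\<dots> \<le> (\<Sum>m\<in>Ms. exp (- 2 * r * (1 + ln (real n))))"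
    proof (rule sum_mono)
      fix m assume m: "m \<in> Ms"
      have mb: "1 \<le> m" "m \<le> n" using m unfolding Ms_def by auto
      let ?b = "exp (4 * real m - 16 * real m * r * lg m)"
      have "measure_pmf.prob ?M (\<Union>I\<in>Sub m. \<Union>J\<in>Sub m. \<Union>v\<in>Vx J. {A. R2 m < Zs I J v A})
          \<le> (\<Sum>I\<in>Sub m. measure_pmf.prob ?M (\<Union>J\<in>Sub m. \<Union>v\<in>Vx J. {A. R2 m < Zs I J v A}))"
        by (rule prob_union_le[OF finSub])
      also have "\<dots> \<le> (\<Sum>I\<in>Sub m. \<Sum>J\<in>Sub m. measure_pmf.prob ?M (\<Union>v\<in>Vx J. {A. R2 m < Zs I J v A}))"
        by (intro sum_mono prob_union_le[OF finSub])
      also have "\<dots> \<le> (\<Sum>I\<in>Sub m. \<Sum>J\<in>Sub m. \<Sum>v\<in>Vx J. measure_pmf.prob ?M {A. R2 m < Zs I J v A})"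
        by (intro sum_mono prob_union_le finVx) auto
      also have "\<dots> \<le> (\<Sum>I\<in>Sub m. \<Sum>J\<in>Sub m. \<Sum>v\<in>Vx J. ?b)"
        by (intro sum_mono ev m) auto
      also have "\<dots> = (\<Sum>I\<in>Sub m. \<Sum>J\<in>Sub m. 2 ^ m * ?b)"
        by (intro sum.cong refl) (simp add: cardVx)
      also have "\<dots> = real (n choose m) ^ 2 * 2 ^ m * ?b"
        by (simp add: cardSub power2_eq_square)
      also have "\<dots> \<le> exp (- 2 * r * (1 + ln (real n)))"
        unfolding lg_def by (rule numeric_term[OF mb r1])
      finally show "measure_pmf.prob ?M (\<Union>I\<in>Sub m. \<Union>J\<in>Sub m. \<Union>v\<in>Vx J. {A. R2 m < Zs I J v A})
          \<le> exp (- 2 * r * (1 + ln (real n)))" .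
    qed
    also have "\<dots> = real (card Ms) * exp (- 2 * r * (1 + ln (real n)))" by simp
    also have "\<dots> \<le> real n * exp (- 2 * r * (1 + ln (real n)))"
    proof -
      have "card Ms \<le> card {1..n}" unfolding Ms_def by (intro card_mono) auto
      then show ?thesis by (intro mult_right_mono) auto
    qed
    also have "\<dots> \<le> real n powr (- r)" by (rule final_sum[OF n1 r1])
    finally show ?thesis .
  qed
  have good: "A \<in> {A. \<forall>m I J. 1 \<le> m \<and> m \<le> n \<and> real m \<le> \<alpha> * real n \<and>
              I \<subseteq> {..<n} \<and> J \<subseteq> {..<n} \<and> card I = m \<and> card J = m \<longrightarrow>
              norm_inf2 (\<lambda>i j. Abar L \<omega> A i j - EAbar L \<omega> p i j)
                 {i\<in>I. (\<Sum>j\<in>J. Abar L \<omega> A i j) \<le> \<alpha> * (\<Sum>l<L. \<omega> l * dmax n p l)} J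
              \<le> C * sqrt (\<alpha> * (\<Sum>l<L. (\<omega> l)\<^sup>2 * dmax n p l) * real m * r
                            * ln (exp 1 * real n / real m))}" if nb: "A \<notin> Bad" for A
  proof (intro CollectI allI impI)
    fix m I J assume h0: "1 \<le> m \<and> m \<le> n \<and> real m \<le> \<alpha> * real n \<and>
              I \<subseteq> {..<n} \<and> J \<subseteq> {..<n} \<and> card I = m \<and> card J = m"
    then have h: "1 \<le> m" "m \<le> n" "real m \<le> \<alpha> * real n" "I \<subseteq> {..<n}" "J \<subseteq> {..<n}" "card I = m" "card J = m"
      by auto
    have m: "m \<in> Ms" using h unfolding Ms_def by auto
    have I: "I \<in> Sub m" and J: "J \<in> Sub m" using h unfolding Sub_def by auto
    have finJ: "finite J" using h finite_subset by blast
    define B where "B i j = Abar L \<omega> A i j - EAbar L \<omega> p i j" for i j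
    define I' where "I' = {i\<in>I. lt J A i}"
    have vb: "Qf B I' J v \<le> R2 m" if v: "v \<in> Vx J" for v
    proof -
      have "\<not> R2 m < Zs I J v A" using nb m I J v unfolding Bad_def by blast
      moreover have "Qf B I' J v = Zs I J v A"
        unfolding Qf_def Zs_def I'_def B_def Yr_def using h finite_subset
        by (subst sum.inter_filter) (auto intro: finite_subset)
      ultimately show ?thesis by simp
    qed
    have "norm_inf2 B I' J \<le> C * sqrt (\<alpha> * S * real m * r * lg m)"
      unfolding norm_inf2_def
    proof (rule cSup_least)
      show "{sqrt (\<Sum>i\<in>I'. (\<Sum>j\<in>J. B i j * x j)\<^sup>2) |x. \<forall>j\<in>J. \<bar>x j\<bar> \<le> 1} \<noteq> {}"
      proof -
        define x0 where "x0 = (\<lambda>_::nat. 0::real)"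
        have "\<forall>j\<in>J. \<bar>x0 j\<bar> \<le> 1" by (simp add: x0_def)
        then show ?thesis by blast
      qed
    next
      fix z assume "z \<in> {sqrt (\<Sum>i\<in>I'. (\<Sum>j\<in>J. B i j * x j)\<^sup>2) |x. \<forall>j\<in>J. \<bar>x j\<bar> \<le> 1}"
      then obtain x where x: "\<forall>j\<in>J. \<bar>x j\<bar> \<le> 1" and z: "z = sqrt (Qf B I' J x)" unfolding Qf_def by auto
      obtain v where v: "v \<in> Vx J" and qv: "Qf B I' J x \<le> Qf B I' J v"
        using cube_vertex[OF finJ x, of B I'] unfolding Vx_def by auto
      have "z \<le> sqrt (R2 m)" unfolding z using qv vb[OF v] by simp
      also have "\<dots> = C * sqrt (\<alpha> * S * real m * r * lg m)"
        unfolding R2_def using C0 by (simp add: real_sqrt_mult)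
      finally show "z \<le> C * sqrt (\<alpha> * S * real m * r * lg m)" .
    qed
    then show "norm_inf2 (\<lambda>i j. Abar L \<omega> A i j - EAbar L \<omega> p i j)
                 {i\<in>I. (\<Sum>j\<in>J. Abar L \<omega> A i j) \<le> \<alpha> * (\<Sum>l<L. \<omega> l * dmax n p l)} J
              \<le> C * sqrt (\<alpha> * (\<Sum>l<L. (\<omega> l)\<^sup>2 * dmax n p l) * real m * r
                            * ln (exp 1 * real n / real m))"
      unfolding B_def I'_def lt_def D_def S_def lg_def by simp
  qed
  have "measure_pmf.prob ?M (space ?M - Bad) = 1 - measure_pmf.prob ?M Bad"
    by (rule measure_pmf.prob_compl) auto
  moreover have "measure_pmf.prob ?M (space ?M - Bad) \<le> measure_pmf.prob ?M {A. \<forall>m I J. 1 \<le> m \<and> m \<le> n \<and> real m \<le> \<alpha> * real n \<and>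
              I \<subseteq> {..<n} \<and> J \<subseteq> {..<n} \<and> card I = m \<and> card J = m \<longrightarrow>
              norm_inf2 (\<lambda>i j. Abar L \<omega> A i j - EAbar L \<omega> p i j)
                 {i\<in>I. (\<Sum>j\<in>J. Abar L \<omega> A i j) \<le> \<alpha> * (\<Sum>l<L. \<omega> l * dmax n p l)} J
              \<le> C * sqrt (\<alpha> * (\<Sum>l<L. (\<omega> l)\<^sup>2 * dmax n p l) * real m * r
                            * ln (exp 1 * real n / real m))}"
    using good by (intro measure_pmf.finite_measure_mono) auto
  ultimately show ?thesis using bad by linarith
qed




lemma bern0_false: "b \<in> set_pmf (bernoulli_pmf 0) \<Longrightarrow> b = False"
  by (cases b) (auto simp: set_pmf_iff)

lemma main_zero:
  fixes n L :: nat and \<omega> :: "nat \<Rightarrow> real" and p :: "nat \<Rightarrow> nat \<Rightarrow> nat \<Rightarrow> real" and \<alpha> r C :: real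
  assumes n1: "n \<ge> 1"
  and pb: "\<forall>l<L. \<forall>i<n. \<forall>j<n. 0 \<le> p l i j \<and> p l i j \<le> 1"
  and wpos: "\<forall>l<L. \<omega> l > 0"
  and S0: "(\<Sum>l<L. (\<omega> l)\<^sup>2 * dmax n p l) = 0"
  shows "measure_pmf.prob (bern_model L n p)
       {A. \<forall>m I J. 1 \<le> m \<and> m \<le> n \<and> real m \<le> \<alpha> * real n \<and>
              I \<subseteq> {..<n} \<and> J \<subseteq> {..<n} \<and> card I = m \<and> card J = m \<longrightarrow>
              norm_inf2 (\<lambda>i j. Abar L \<omega> A i j - EAbar L \<omega> p i j)
                 {i\<in>I. (\<Sum>j\<in>J. Abar L \<omega> A i j) \<le> \<alpha> * (\<Sum>l<L. \<omega> l * dmax n p l)} J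
              \<le> C * sqrt (\<alpha> * (\<Sum>l<L. (\<omega> l)\<^sup>2 * dmax n p l) * real m * r
                            * ln (exp 1 * real n / real m))}
     \<ge> 1 - real n powr (- r)"
proof -
  have dnn: "\<forall>l<L. 0 \<le> dmax n p l" using dmax_nonneg[OF n1] pb by blast
  have d0: "dmax n p l = 0" if l: "l < L" for l
  proof -
    have "\<forall>l\<in>{..<L}. (\<omega> l)\<^sup>2 * dmax n p l = 0"
      using S0 dnn by (subst sum_nonneg_eq_0_iff[symmetric]) auto
    then have "(\<omega> l)\<^sup>2 * dmax n p l = 0" using l by auto
    then show ?thesis using wpos l by auto
  qed
  have p0: "p l i j = 0" if "l < L" "i < n" "j < n" for l i j
  proof -
    have "p l i j \<le> dmax n p l / real n" by (rule p_le_d) (use that n1 in auto)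
    then show ?thesis using d0[OF that(1)] pb that by (auto intro: antisym)
  qed
  let ?M = "bern_model L n p"
  have supp: "A c = False" if A: "A \<in> set_pmf ?M" for A c
  proof -
    have Ad: "A \<in> PiE_dflt ({..<L} \<times> {..<n} \<times> {..<n}) False (set_pmf \<circ> (\<lambda>(l, i, j). bernoulli_pmf (p l i j)))"
      using A unfolding bern_model_def by (subst (asm) set_Pi_pmf) auto
    then show ?thesis
    proof (cases "c \<in> {..<L} \<times> {..<n} \<times> {..<n}")
      case True
      obtain l i j where c: "c = (l,i,j)" by (cases c) auto
      have "A c \<in> set_pmf (bernoulli_pmf (p l i j))" using Ad True c unfolding PiE_dflt_def by auto
      then have "A c \<in> set_pmf (bernoulli_pmf 0)" using p0 True c by auto
      then show ?thesis by (rule bern0_false)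
    next
      case False
      have "\<forall>x. x \<notin> {..<L} \<times> {..<n} \<times> {..<n} \<longrightarrow> A x = False"
        using Ad unfolding PiE_dflt_def by blast
      then show ?thesis using False by blast
    qed
  qed
  have "measure_pmf.prob ?M
       {A. \<forall>m I J. 1 \<le> m \<and> m \<le> n \<and> real m \<le> \<alpha> * real n \<and>
              I \<subseteq> {..<n} \<and> J \<subseteq> {..<n} \<and> card I = m \<and> card J = m \<longrightarrow>
              norm_inf2 (\<lambda>i j. Abar L \<omega> A i j - EAbar L \<omega> p i j)
                 {i\<in>I. (\<Sum>j\<in>J. Abar L \<omega> A i j) \<le> \<alpha> * (\<Sum>l<L. \<omega> l * dmax n p l)} J
              \<le> C * sqrt (\<alpha> * (\<Sum>l<L. (\<omega> l)\<^sup>2 * dmax n p l) * real m * r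
                            * ln (exp 1 * real n / real m))} = 1"
  proof (subst measure_pmf.prob_eq_1, simp, rule AE_pmfI, intro CollectI allI impI)
    fix A m I J assume A: "A \<in> set_pmf ?M" and h0: "1 \<le> m \<and> m \<le> n \<and> real m \<le> \<alpha> * real n \<and>
              I \<subseteq> {..<n} \<and> J \<subseteq> {..<n} \<and> card I = m \<and> card J = m"
    have IJ: "I \<subseteq> {..<n}" "J \<subseteq> {..<n}" using h0 by auto
    define I' where "I' = {i\<in>I. (\<Sum>j\<in>J. Abar L \<omega> A i j) \<le> \<alpha> * (\<Sum>l<L. \<omega> l * dmax n p l)}"
    have B0: "Abar L \<omega> A i j - EAbar L \<omega> p i j = 0" if "i \<in> I" "j \<in> J" for i j
    proof -
      have "i < n" "j < n" using that IJ by auto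
      then show ?thesis unfolding Abar_def EAbar_def using supp[OF A] p0 by simp
    qed
    have set0: "{sqrt (\<Sum>i\<in>I'. (\<Sum>j\<in>J. (Abar L \<omega> A i j - EAbar L \<omega> p i j) * x j)\<^sup>2) |x. \<forall>j\<in>J. \<bar>x j\<bar> \<le> 1} = {0}"
    proof -
      have "(\<Sum>i\<in>I'. (\<Sum>j\<in>J. (Abar L \<omega> A i j - EAbar L \<omega> p i j) * x j)\<^sup>2) = 0" for x :: "nat \<Rightarrow> real"
        using B0 unfolding I'_def by (intro sum.neutral) auto
      moreover have "\<exists>x::nat \<Rightarrow> real. \<forall>j\<in>J. \<bar>x j\<bar> \<le> 1" by (rule exI[of _ "\<lambda>_. 0"]) simp
      ultimately show ?thesis by auto
    qed
    show "norm_inf2 (\<lambda>i j. Abar L \<omega> A i j - EAbar L \<omega> p i j)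
                 {i\<in>I. (\<Sum>j\<in>J. Abar L \<omega> A i j) \<le> \<alpha> * (\<Sum>l<L. \<omega> l * dmax n p l)} J
              \<le> C * sqrt (\<alpha> * (\<Sum>l<L. (\<omega> l)\<^sup>2 * dmax n p l) * real m * r
                            * ln (exp 1 * real n / real m))"
      unfolding norm_inf2_def I'_def[symmetric] set0 S0 by simp
  qed
  moreover have "0 \<le> real n powr (- r)" by simp
  ultimately show ?thesis by linarith
qed

theorem mainTheorem12:
  fixes c0 :: real
  assumes "c0 > 0"
  shows "\<exists>C>0. \<forall>(n::nat) (L::nat) (\<omega>::nat \<Rightarrow> real) (p::nat \<Rightarrow> nat \<Rightarrow> nat \<Rightarrow> real)
                  (\<alpha>::real) (r::real).
     n \<ge> 1 \<longrightarrow> L \<ge> 1 \<longrightarrow>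
     (\<forall>l<L. \<forall>i<n. \<forall>j<n. 0 \<le> p l i j \<and> p l i j \<le> 1) \<longrightarrow>
     (\<forall>l<L. \<omega> l > 0) \<longrightarrow> (\<Sum>l<L. \<omega> l) = 1 \<longrightarrow>
     Max (\<omega> ` {..<L}) * (\<Sum>l<L. \<omega> l * dmax n p l) \<le> c0 * (\<Sum>l<L. (\<omega> l)\<^sup>2 * dmax n p l) \<longrightarrow>
     \<alpha> > 0 \<longrightarrow> r \<ge> 1 \<longrightarrow>
     measure_pmf.prob (bern_model L n p)
       {A. \<forall>m I J. 1 \<le> m \<and> m \<le> n \<and> real m \<le> \<alpha> * real n \<and>
              I \<subseteq> {..<n} \<and> J \<subseteq> {..<n} \<and> card I = m \<and> card J = m \<longrightarrow>
              norm_inf2 (\<lambda>i j. Abar L \<omega> A i j - EAbar L \<omega> p i j)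
                 {i\<in>I. (\<Sum>j\<in>J. Abar L \<omega> A i j) \<le> \<alpha> * (\<Sum>l<L. \<omega> l * dmax n p l)} J
              \<le> C * sqrt (\<alpha> * (\<Sum>l<L. (\<omega> l)\<^sup>2 * dmax n p l) * real m * r
                            * ln (exp 1 * real n / real m))}
     \<ge> 1 - real n powr (- r)"
proof (intro exI[of _ "sqrt (16 * (8 + 4 * c0))"] conjI allI impI)
  have "0 < 8 + 4 * c0" using assms by linarith
  then have "0 < 16 * (8 + 4 * c0)" by (intro mult_pos_pos) simp_all
  then show "sqrt (16 * (8 + 4 * c0)) > 0" by simp
next
  fix n L :: nat and \<omega> :: "nat \<Rightarrow> real" and p :: "nat \<Rightarrow> nat \<Rightarrow> nat \<Rightarrow> real" and \<alpha> r :: real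
  assume n1: "n \<ge> 1" and L1: "L \<ge> 1"
    and pb: "\<forall>l<L. \<forall>i<n. \<forall>j<n. 0 \<le> p l i j \<and> p l i j \<le> 1"
    and wpos: "\<forall>l<L. \<omega> l > 0" and ws: "(\<Sum>l<L. \<omega> l) = 1"
    and cond: "Max (\<omega> ` {..<L}) * (\<Sum>l<L. \<omega> l * dmax n p l) \<le> c0 * (\<Sum>l<L. (\<omega> l)\<^sup>2 * dmax n p l)"
    and apos: "\<alpha> > 0" and r1: "r \<ge> 1"
  have Snn: "(\<Sum>l<L. (\<omega> l)\<^sup>2 * dmax n p l) \<ge> 0"
    using dmax_nonneg[OF n1] pb by (intro sum_nonneg mult_nonneg_nonneg) auto
  show "measure_pmf.prob (bern_model L n p)
       {A. \<forall>m I J. 1 \<le> m \<and> m \<le> n \<and> real m \<le> \<alpha> * real n \<and>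
              I \<subseteq> {..<n} \<and> J \<subseteq> {..<n} \<and> card I = m \<and> card J = m \<longrightarrow>
              norm_inf2 (\<lambda>i j. Abar L \<omega> A i j - EAbar L \<omega> p i j)
                 {i\<in>I. (\<Sum>j\<in>J. Abar L \<omega> A i j) \<le> \<alpha> * (\<Sum>l<L. \<omega> l * dmax n p l)} J
              \<le> sqrt (16 * (8 + 4 * c0)) * sqrt (\<alpha> * (\<Sum>l<L. (\<omega> l)\<^sup>2 * dmax n p l) * real m * r
                            * ln (exp 1 * real n / real m))}
     \<ge> 1 - real n powr (- r)"
  proof (cases "(\<Sum>l<L. (\<omega> l)\<^sup>2 * dmax n p l) > 0")
    case True
    show ?thesis by (rule main_pos[OF assms n1 L1 pb wpos cond apos r1 True])
  next
    case False
    then have "(\<Sum>l<L. (\<omega> l)\<^sup>2 * dmax n p l) = 0" using Snn by linarith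
    then show ?thesis by (rule main_zero[OF n1 pb wpos])
  qed
qed


end
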